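(* Let $\gamma_0\in\mathbb{R}$ and let $(X_i)_{i\geq1}$ be i.i.d. with distribution function $F\in D(G_{\gamma_0})$, with normalization constants $a_m=a(m)$, $b_m=U(m)$ where $U=\big(\frac{1}{1-F}\big)^{\leftarrow}$ and $a(t)=\gamma_0U(t)$ if $\gamma_0>0$, $a(t)=-\gamma_0(U(\infty)-U(t))$ if $\gamma_0<0$, $a(t)=U(t)-t^{-1}\int_0^tU(s)ds$ if $\gamma_0=0$. Let $m=m(n)$ be positive integers with $m(n)\to+\infty$. Let $M_{k,m}=\max(X_{(k-1)m+1},\ldots,X_{km})$, $\widetilde M_{k,m}=(M_{k,m}-b_m)/a_m$, and $\mathbb{P}_n[f]=\frac1n\sum_{k=1}^n f(\widetilde M_{k,m(n)})$. Then for every upper semi-continuous function $f:\mathbb{R}\to[-\infty,+\infty)$ that is bounded from above, \[ \limsup_{n\to+\infty}\mathbb{P}_n[f]\leq G_{\gamma_0}[f]\quad\text{almost surely}, \] where $G_{\gamma_0}[f]=\int f\,dG_{\gamma_0}\in[-\infty,+\infty)$.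
   Context: For $\gamma\in\mathbb{R}$, $G_\gamma$ denotes the generalized extreme value distribution with distribution function $F_\gamma(x)=\exp(-(1+\gamma x)^{-1/\gamma})$ for $1+\gamma x>0$ (interpreted as $\exp(-e^{-x})$ when $\gamma=0$). $F\in D(G_\gamma)$ means there exist constants $a_m>0$, $b_m$ with $F^m(a_mx+b_m)\to F_\gamma(x)$ for all real $x$; the constants in the claim are a valid choice. $U=\big(\frac{1}{1-F}\big)^{\leftarrow}$ denotes the left-continuous inverse of $1/(1-F)$. *)

theory Defs
  imports "HOL-Probability.Probability"
begin

definition gev_cdf :: "real \<Rightarrow> real \<Rightarrow> real" where
  "gev_cdf \<gamma> x =
     (if \<gamma> = 0 then exp (- exp (- x))
      else if 1 + \<gamma> * x > 0 then exp (- ((1 + \<gamma> * x) powr (- 1 / \<gamma>)))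
      else if \<gamma> > 0 then 0 else 1)"

definition gev_measure :: "real \<Rightarrow> real measure" where
  "gev_measure \<gamma> = interval_measure (gev_cdf \<gamma>)"

definition gev_normalizes :: "(real \<Rightarrow> real) \<Rightarrow> real \<Rightarrow> (nat \<Rightarrow> real) \<Rightarrow> (nat \<Rightarrow> real) \<Rightarrow> bool" where
  "gev_normalizes F \<gamma> a b \<longleftrightarrow>
     (\<forall>m\<ge>1. a m > 0) \<and>
     (\<forall>x. (\<lambda>m. (F (a m * x + b m)) ^ m) \<longlonglongrightarrow> gev_cdf \<gamma> x)"

definition in_DoA :: "(real \<Rightarrow> real) \<Rightarrow> real \<Rightarrow> bool" where
  "in_DoA F \<gamma> \<longleftrightarrow> (\<exists>a b. gev_normalizes F \<gamma> a b)"

definition usc :: "(real \<Rightarrow> ereal) \<Rightarrow> bool" where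
  "usc f \<longleftrightarrow> (\<forall>x. Limsup (at x) f \<le> f x)"

definition ext_integral :: "real measure \<Rightarrow> (real \<Rightarrow> ereal) \<Rightarrow> ereal" where
  "ext_integral G f =
     enn2ereal (\<integral>\<^sup>+ x. e2ennreal (max 0 (f x)) \<partial>G)
     - enn2ereal (\<integral>\<^sup>+ x. e2ennreal (max 0 (- f x)) \<partial>G)"

definition block_max_norm ::
  "(nat \<Rightarrow> 'a \<Rightarrow> real) \<Rightarrow> (nat \<Rightarrow> real) \<Rightarrow> (nat \<Rightarrow> real) \<Rightarrow> nat \<Rightarrow> nat \<Rightarrow> 'a \<Rightarrow> real" where
  "block_max_norm X a b m k \<omega> =
     (Max ((\<lambda>i. X i \<omega>) ` {(k - 1) * m + 1 .. k * m}) - b m) / a m"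

definition emp_block :: "(nat \<Rightarrow> 'a \<Rightarrow> real) \<Rightarrow> (nat \<Rightarrow> real) \<Rightarrow> (nat \<Rightarrow> real) \<Rightarrow> (nat \<Rightarrow> nat)
    \<Rightarrow> (real \<Rightarrow> ereal) \<Rightarrow> nat \<Rightarrow> 'a \<Rightarrow> ereal" where
  "emp_block X a b m f n \<omega> =
     ereal (1 / real n) * (\<Sum>k = 1..n. f (block_max_norm X a b (m n) k \<omega>))"

end

theory Submission
  imports Defs "HOL-Real_Asymp.Real_Asymp"
begin



lemma tr_ev: "(g \<longlongrightarrow> l) F \<Longrightarrow> eventually P F \<Longrightarrow> (\<And>y. P y \<Longrightarrow> g y = f y) \<Longrightarrow> (f \<longlongrightarrow> l) F"
  by (rule Lim_transform_eventually) (auto elim!: eventually_mono)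

lemma gev_cdf_right_cont: "continuous (at_right x) (gev_cdf \<gamma>)"
proof -
  have lin: "((\<lambda>y. 1 + \<gamma> * y) \<longlongrightarrow> 1 + \<gamma> * x) (at_right x)" by (intro tendsto_intros)
  let ?g = "\<lambda>x. exp (- ((1 + \<gamma> * x) powr (- 1 / \<gamma>)))"
  consider "\<gamma> = 0" | "\<gamma> \<noteq> 0" "1 + \<gamma> * x > 0" | "\<gamma> \<noteq> 0" "1 + \<gamma> * x < 0" | "\<gamma> > 0" "1 + \<gamma> * x = 0"
    | "\<gamma> < 0" "1 + \<gamma> * x = 0" by fastforce
  then show ?thesis
  proof cases
    case 1
    then have "gev_cdf \<gamma> = (\<lambda>x. exp (- exp (- x)))" by (auto simp: gev_cdf_def fun_eq_iff)
    then show ?thesis by (auto intro!: continuous_intros)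
  next
    case 2
    have "isCont ?g x" using 2 by (auto intro!: continuous_intros)
    then have "(?g \<longlongrightarrow> ?g x) (at_right x)" by (simp add: isCont_def filterlim_at_split)
    moreover have "eventually (\<lambda>y. 1 + \<gamma> * y > 0) (at_right x)"
      using order_tendstoD(1)[OF lin, of 0] 2 by simp
    ultimately have "(gev_cdf \<gamma> \<longlongrightarrow> ?g x) (at_right x)"
      by (rule tr_ev) (use 2 in \<open>auto simp: gev_cdf_def\<close>)
    then show ?thesis using 2 by (simp add: continuous_within gev_cdf_def)
  next
    case 3
    have "eventually (\<lambda>y. 1 + \<gamma> * y < 0) (at_right x)"
      using order_tendstoD(2)[OF lin, of 0] 3 by simp
    then have "eventually (\<lambda>y. gev_cdf \<gamma> y = gev_cdf \<gamma> x) (at_right x)"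
      by eventually_elim (use 3 in \<open>auto simp: gev_cdf_def\<close>)
    then have "(gev_cdf \<gamma> \<longlongrightarrow> gev_cdf \<gamma> x) (at_right x)"
      by (rule tendsto_eventually)
    then show ?thesis by (simp add: continuous_within)
  next
    case 4
    have x: "x = -1/\<gamma>" using 4 by (auto simp: field_simps)
    have "(?g \<longlongrightarrow> 0) (at_right (-1/\<gamma>))" using 4 by real_asymp
    moreover have "eventually (\<lambda>y. 1 + \<gamma> * y > 0) (at_right x)"
    proof -
      have "eventually (\<lambda>y. y > x) (at_right x)" by (simp add: eventually_at_right_less)
      then show ?thesis proof eventually_elim
        case (elim y) then have "\<gamma> * x < \<gamma> * y" using 4 by simp
        then show ?case using 4 by linarith
      qed
    qed
    ultimately have "(gev_cdf \<gamma> \<longlongrightarrow> 0) (at_right x)" unfolding x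
      by (rule tr_ev) (use 4 in \<open>auto simp: gev_cdf_def\<close>)
    then show ?thesis using 4 by (simp add: continuous_within gev_cdf_def)
  next
    case 5
    have "eventually (\<lambda>y. y > x) (at_right x)" by (simp add: eventually_at_right_less)
    then have "eventually (\<lambda>y. gev_cdf \<gamma> y = gev_cdf \<gamma> x) (at_right x)"
      proof eventually_elim
        case (elim y) then have "\<gamma> * y < \<gamma> * x" using 5 by simp
        then have "\<not> 0 < 1 + \<gamma> * y" using 5 by linarith
        then show ?case using 5 by (simp add: gev_cdf_def)
      qed
    then have "(gev_cdf \<gamma> \<longlongrightarrow> gev_cdf \<gamma> x) (at_right x)"
      by (rule tendsto_eventually)
    then show ?thesis by (simp add: continuous_within)
  qed
qed

lemma gev_cdf_at_top: "(gev_cdf \<gamma> \<longlongrightarrow> 1) at_top"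
proof -
  consider "\<gamma> = 0" | "\<gamma> > 0" | "\<gamma> < 0" by fastforce
  then show ?thesis
  proof cases
    case 1
    then have "gev_cdf \<gamma> = (\<lambda>x. exp (- exp (- x)))" by (auto simp: gev_cdf_def fun_eq_iff)
    then show ?thesis by simp real_asymp
  next
    case 2
    have "((\<lambda>x. exp (- ((1 + \<gamma> * x) powr (- 1 / \<gamma>)))) \<longlongrightarrow> 1) at_top" using 2 by real_asymp
    moreover have "eventually (\<lambda>x. 1 + \<gamma> * x > 0) at_top" using 2 by real_asymp
    ultimately show ?thesis
      by (rule tr_ev) (use 2 in \<open>auto simp: gev_cdf_def\<close>)
  next
    case 3
    have "eventually (\<lambda>x. 1 + \<gamma> * x < 0) at_top" using 3 by real_asymp
    then have "eventually (\<lambda>x. gev_cdf \<gamma> x = 1) at_top"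
      by eventually_elim (use 3 in \<open>auto simp: gev_cdf_def\<close>)
    then show ?thesis by (rule tendsto_eventually)
  qed
qed

lemma gev_cdf_at_bot: "(gev_cdf \<gamma> \<longlongrightarrow> 0) at_bot"
proof -
  consider "\<gamma> = 0" | "\<gamma> > 0" | "\<gamma> < 0" by fastforce
  then show ?thesis
  proof cases
    case 1
    then have "gev_cdf \<gamma> = (\<lambda>x. exp (- exp (- x)))" by (auto simp: gev_cdf_def fun_eq_iff)
    then show ?thesis by simp real_asymp
  next
    case 3
    have "((\<lambda>x. exp (- ((1 + \<gamma> * x) powr (- 1 / \<gamma>)))) \<longlongrightarrow> 0) at_bot" using 3 by real_asymp
    moreover have "eventually (\<lambda>x. 1 + \<gamma> * x > 0) at_bot" using 3 by real_asymp
    ultimately show ?thesis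
      by (rule tr_ev) (use 3 in \<open>auto simp: gev_cdf_def\<close>)
  next
    case 2
    have "eventually (\<lambda>x. 1 + \<gamma> * x < 0) at_bot" using 2 by real_asymp
    then have "eventually (\<lambda>x. gev_cdf \<gamma> x = 0) at_bot"
      by eventually_elim (use 2 in \<open>auto simp: gev_cdf_def\<close>)
    then show ?thesis by (rule tendsto_eventually)
  qed
qed




lemma blocks_disjoint:
  assumes "(m::nat) > 0"
  shows "disjoint_family_on (\<lambda>k. {(k - 1) * m + 1 .. k * m}) {1..n}"
  unfolding disjoint_family_on_def
proof (intro ballI impI)
  fix k k' assume kk: "k \<in> {1..n}" "k' \<in> {1..n}" "k \<noteq> k'"
  show "{(k - 1) * m + 1..k * m} \<inter> {(k' - 1) * m + 1..k' * m} = {}"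
  proof (rule ccontr)
    assume "\<not> ?thesis"
    then obtain i where "i \<in> {(k - 1) * m + 1..k * m} \<inter> {(k' - 1) * m + 1..k' * m}" by blast
    then have i: "(k - 1) * m + 1 \<le> i" "i \<le> k * m" "(k' - 1) * m + 1 \<le> i" "i \<le> k' * m" by auto
    consider "k < k'" | "k' < k" using kk by linarith
    then show False
    proof cases
      case 1 then have "k \<le> k' - 1" by linarith
      then have "k * m \<le> (k' - 1) * m" by (rule mult_le_mono1)
      then show False using i by linarith
    next
      case 2 then have "k' \<le> k - 1" by linarith
      then have "k' * m \<le> (k - 1) * m" by (rule mult_le_mono1)
      then show False using i by linarith
    qed
  qed
qed

lemma card_block: "card {(k - 1) * m + 1 .. k * m} = m" if "k \<ge> 1" for k m :: nat
proof -
  have "k * m = (k - 1) * m + m" using that by (cases k) auto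
  then show ?thesis by simp
qed

context prob_space
begin

lemma block_indep:
  fixes X :: "nat \<Rightarrow> 'a \<Rightarrow> real" and c :: real
  assumes indep: "indep_vars (\<lambda>_. borel) X {1..}" and m: "m > 0"
  shows "indep_vars (\<lambda>_. borel) (\<lambda>k \<omega>. of_bool (\<forall>i\<in>{(k - 1) * m + 1 .. k * m}. X i \<omega> \<le> c) :: real) {1..n}"
proof -
  let ?K = "\<lambda>k. {(k - 1) * m + 1 .. k * m}"
  have 1: "indep_vars (\<lambda>k. PiM (?K k) (\<lambda>_. borel)) (\<lambda>k \<omega>. restrict (\<lambda>i. X i \<omega>) (?K k)) {1..n}"
    by (rule indep_vars_restrict[OF indep _ blocks_disjoint[OF m]]) auto
  have 2: "indep_vars (\<lambda>_. borel) (\<lambda>k \<omega>. (\<lambda>y. of_bool (\<forall>i\<in>?K k. y i \<le> c) :: real) (restrict (\<lambda>i. X i \<omega>) (?K k))) {1..n}"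
  proof (rule indep_vars_compose2[OF 1])
    fix k
    have "Measurable.pred (PiM (?K k) (\<lambda>_. borel)) (\<lambda>y. \<forall>i\<in>?K k. y i \<le> c)"
      by (intro pred_intros_finite) auto
    then show "(\<lambda>y. of_bool (\<forall>i\<in>?K k. y i \<le> c) :: real) \<in> borel_measurable (PiM (?K k) (\<lambda>_. borel))"
      by simp
  qed
  show ?thesis
    by (rule indep_vars_cong[THEN iffD1, OF _ _ _ 2]) auto
qed

lemma block_prob:
  fixes X :: "nat \<Rightarrow> 'a \<Rightarrow> real" and c :: real
  assumes indep: "indep_vars (\<lambda>_. borel) X {1..}" and k: "k \<ge> 1" and m: "m > 0"
    and F: "\<And>i x. i \<ge> 1 \<Longrightarrow> prob {\<omega> \<in> space M. X i \<omega> \<le> x} = F x"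
  shows "prob {\<omega> \<in> space M. \<forall>i\<in>{(k - 1) * m + 1 .. k * m}. X i \<omega> \<le> c} = F c ^ m"
proof -
  let ?K = "{(k - 1) * m + 1 .. k * m}"
  let ?A = "\<lambda>i. X i -` {..c} \<inter> space M"
  have ind: "indep_sets (\<lambda>i. {X i -` A \<inter> space M | A. A \<in> sets borel}) {1..}"
    using indep by (simp add: indep_vars_def2)
  have ne: "?K \<noteq> {}"
  proof -
    have "k * m = (k - 1) * m + m" using k by (cases k) auto
    then have "(k - 1) * m + 1 \<le> k * m" using m by linarith
    then show "?K \<noteq> {}" by (simp del: One_nat_def)
  qed
  have sub: "?K \<subseteq> {1..}" by auto
  have "prob (\<Inter>i\<in>?K. ?A i) = (\<Prod>i\<in>?K. prob (?A i))"
  proof (rule indep_setsD[OF ind sub ne])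
    show "\<forall>j\<in>?K. ?A j \<in> {X j -` A \<inter> space M |A. A \<in> sets borel}"
      by (intro ballI CollectI exI[of _ "{..c}"]) simp
  qed simp
  moreover have "(\<Inter>i\<in>?K. ?A i) = {\<omega> \<in> space M. \<forall>i\<in>?K. X i \<omega> \<le> c}"
    using ne by blast
  moreover have "prob (?A i) = F c" if "i \<in> ?K" for i
  proof -
    have "?A i = {\<omega> \<in> space M. X i \<omega> \<le> c}" by auto
    moreover have "i \<ge> 1" using that by auto
    ultimately show ?thesis using F[of i c] by simp
  qed
  ultimately show ?thesis using card_block[OF k, of m] by simp
qed

end



context prob_space
begin

lemma hoeffding_row:
  fixes Z :: "nat \<Rightarrow> 'a \<Rightarrow> real"
  assumes ind: "indep_vars (\<lambda>_. borel) Z {1..n}" and bnd: "\<And>k \<omega>. Z k \<omega> \<in> {0..1}"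
    and n: "n \<ge> 1" and d: "\<delta> > 0" and E: "\<And>k. k \<in> {1..n} \<Longrightarrow> expectation (Z k) = p"
  shows "prob {\<omega>\<in>space M. \<bar>(\<Sum>k\<in>{1..n}. Z k \<omega>) - n * p\<bar> \<ge> n * \<delta>} \<le> 2 * exp (-2 * \<delta>\<^sup>2) ^ n"
proof -
  interpret H: Hoeffding_ineq M "{1..n}" Z "\<lambda>_. 0" "\<lambda>_. 1" "\<Sum>i\<in>{1..n}. expectation (Z i)"
    by unfold_locales (use ind bnd in auto)
  have mu: "(\<Sum>i\<in>{1..n}. expectation (Z i)) = n * p" using E by simp
  have "prob {\<omega>\<in>space M. \<bar>(\<Sum>k\<in>{1..n}. Z k \<omega>) - n * p\<bar> \<ge> n * \<delta>}
      \<le> 2 * exp (-2 * (n * \<delta>)\<^sup>2 / (\<Sum>i\<in>{1..n}. (1 - 0)\<^sup>2))"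
    using H.Hoeffding_ineq_abs_ge[of "n * \<delta>"] d n unfolding mu by simp
  also have "(\<Sum>i\<in>{1..n}. (1 - 0::real)\<^sup>2) = n" by simp
  also have "-2 * (n * \<delta>)\<^sup>2 / n = real n * (-2 * \<delta>\<^sup>2)" using n by (simp add: power2_eq_square field_simps)
  also have "exp (real n * (-2 * \<delta>\<^sup>2)) = exp (-2 * \<delta>\<^sup>2) ^ n" by (rule exp_of_nat_mult)
  finally show ?thesis .
qed

lemma triangular_lln:
  fixes Z :: "nat \<Rightarrow> nat \<Rightarrow> 'a \<Rightarrow> real"
  assumes ind: "\<And>n. indep_vars (\<lambda>_. borel) (Z n) {1..n}" and bnd: "\<And>n k \<omega>. Z n k \<omega> \<in> {0..1}"
    and E: "\<And>n k. k \<in> {1..n} \<Longrightarrow> expectation (Z n k) = p n" and p: "p \<longlonglongrightarrow> L"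
  shows "AE \<omega> in M. (\<lambda>n. (\<Sum>k\<in>{1..n}. Z n k \<omega>) / n) \<longlonglongrightarrow> L"
proof -
  have meas: "(\<lambda>\<omega>. \<Sum>k\<in>{1..n}. Z n k \<omega>) \<in> borel_measurable M" for n
    by (rule borel_measurable_sum) (use ind in \<open>auto simp: indep_vars_def\<close>)
  have step: "AE \<omega> in M. eventually (\<lambda>n. \<bar>(\<Sum>k\<in>{1..n}. Z n k \<omega>) / n - p n\<bar> < \<delta>) sequentially"
    if d: "\<delta> > 0" for \<delta>
  proof -
    define A where "A n = {\<omega>\<in>space M. \<bar>(\<Sum>k\<in>{1..n}. Z n k \<omega>) - n * p n\<bar> \<ge> n * \<delta>}" for n
    have A_sets: "A n \<in> sets M" for n
    proof -
      have "(\<lambda>\<omega>. \<bar>(\<Sum>k\<in>{1..n}. Z n k \<omega>) - n * p n\<bar>) \<in> borel_measurable M"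
        using meas[of n] by (intro borel_measurable_abs borel_measurable_diff) auto
      then show ?thesis unfolding A_def by (intro borel_measurable_le) auto
    qed
    have r: "exp (-2 * \<delta>\<^sup>2) < 1" "0 \<le> exp (-2 * \<delta>\<^sup>2)" using d by auto
    have "summable (\<lambda>n. 2 * exp (-2 * \<delta>\<^sup>2) ^ n)"
      using r by (intro summable_mult summable_geometric) auto
    then have "summable (\<lambda>n. measure M (A n))"
    proof (rule summable_comparison_test'[where N=1])
      fix n :: nat assume "n \<ge> 1"
      then show "norm (measure M (A n)) \<le> 2 * exp (-2 * \<delta>\<^sup>2) ^ n"
        unfolding A_def using hoeffding_row[OF ind bnd _ d E] by simp
    qed
    then have "AE \<omega> in M. eventually (\<lambda>n. \<omega> \<in> space M - A n) sequentially"
      by (intro borel_cantelli_AE1 A_sets) (auto simp: emeasure_eq_measure)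
    then show ?thesis
    proof (rule AE_mp, intro AE_I2 impI)
      fix \<omega> assume \<omega>: "\<omega> \<in> space M" and ev: "eventually (\<lambda>n. \<omega> \<in> space M - A n) sequentially"
      have "eventually (\<lambda>n. n \<ge> 1) sequentially" by (rule eventually_ge_at_top)
      with ev show "eventually (\<lambda>n. \<bar>(\<Sum>k\<in>{1..n}. Z n k \<omega>) / n - p n\<bar> < \<delta>) sequentially"
      proof eventually_elim
        case (elim n)
        then have "\<bar>(\<Sum>k\<in>{1..n}. Z n k \<omega>) - n * p n\<bar> < n * \<delta>" using \<omega> by (auto simp: A_def)
        moreover have "(\<Sum>k\<in>{1..n}. Z n k \<omega>) / n - p n = ((\<Sum>k\<in>{1..n}. Z n k \<omega>) - n * p n) / n"
          using elim by (simp add: field_simps)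
        ultimately show ?case using elim by (simp add: abs_divide pos_divide_less_eq mult.commute)
      qed
    qed
  qed
  have "AE \<omega> in M. \<forall>j::nat. eventually (\<lambda>n. \<bar>(\<Sum>k\<in>{1..n}. Z n k \<omega>) / n - p n\<bar> < 1 / Suc j) sequentially"
    unfolding AE_all_countable by (intro allI step) simp
  then show ?thesis
  proof (rule AE_mp, intro AE_I2 impI)
    fix \<omega> assume all: "\<forall>j::nat. eventually (\<lambda>n. \<bar>(\<Sum>k\<in>{1..n}. Z n k \<omega>) / n - p n\<bar> < 1 / Suc j) sequentially"
    have "(\<lambda>n. (\<Sum>k\<in>{1..n}. Z n k \<omega>) / n - p n) \<longlonglongrightarrow> 0"
    proof (rule LIMSEQ_I)
      fix r :: real assume "r > 0"
      from reals_Archimedean[OF this] obtain j :: nat where "inverse (real (Suc j)) < r" ..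
      then have j: "1 / Suc j < r" by (simp add: inverse_eq_divide)
      from all[rule_format, of j] obtain N where "\<And>n. n \<ge> N \<Longrightarrow> \<bar>(\<Sum>k\<in>{1..n}. Z n k \<omega>) / n - p n\<bar> < 1 / Suc j"
        by (auto simp: eventually_sequentially)
      then show "\<exists>N. \<forall>n\<ge>N. norm ((\<Sum>k\<in>{1..n}. Z n k \<omega>) / n - p n - 0) < r"
        using j by (intro exI[of _ N]) (auto intro: less_trans)
    qed
    from tendsto_add[OF this p] show "(\<lambda>n. (\<Sum>k\<in>{1..n}. Z n k \<omega>) / n) \<longlonglongrightarrow> L" by simp
  qed
qed

end



lemma usc_ev_less:
  assumes "usc f" "f x < z"
  shows "\<exists>d>0. \<forall>y. dist y x < d \<longrightarrow> f y < z"
proof -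
  have "Limsup (at x) f < z" using assms unfolding usc_def by (meson le_less_trans)
  then have "eventually (\<lambda>y. f y < z) (at x)" by (rule Limsup_lessD)
  then obtain d where d: "d > 0" "\<And>y. y \<noteq> x \<Longrightarrow> dist y x < d \<Longrightarrow> f y < z"
    unfolding eventually_at by auto
  show ?thesis
  proof (intro exI[of _ d] conjI allI impI)
    fix y assume "dist y x < d" then show "f y < z" using d assms(2) by (cases "y = x") auto
  qed (use d in auto)
qed

lemma usc_open_less:
  assumes "usc f" shows "open {y. f y < z}"
  unfolding open_dist
proof (intro ballI)
  fix x assume "x \<in> {y. f y < z}"
  then have "f x < z" by simp
  from usc_ev_less[OF assms this] obtain d where "d > 0" "\<forall>y. dist y x < d \<longrightarrow> f y < z" by blast
  then show "\<exists>e>0. \<forall>y. dist y x < e \<longrightarrow> y \<in> {y. f y < z}" by auto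
qed

lemma usc_measurable:
  assumes "usc f" shows "f \<in> borel_measurable borel"
proof (rule borel_measurableI_less)
  fix z show "{x \<in> space borel. f x < z} \<in> sets borel"
    using usc_open_less[OF assms, of z] by simp
qed

lemma usc_seq:
  assumes "usc f" "y \<longlonglongrightarrow> x" "f x < z"
  shows "eventually (\<lambda>n. f (y n) < z) sequentially"
proof -
  obtain d where d: "d > 0" "\<forall>y. dist y x < d \<longrightarrow> f y < z" using usc_ev_less[OF assms(1,3)] by auto
  have "eventually (\<lambda>n. dist (y n) x < d) sequentially" using assms(2) d(1) by (rule tendstoD)
  then show ?thesis by eventually_elim (use d in auto)
qed




lemma limsup_cminus_bound:
  fixes I :: "nat \<Rightarrow> ennreal" and c :: real
  assumes J: "J \<le> liminf I"
  shows "limsup (\<lambda>n. ereal c - enn2ereal (I n)) \<le> ereal c - enn2ereal J"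
  unfolding Limsup_le_iff
proof (intro allI impI)
  fix y assume y: "y > ereal c - enn2ereal J"
  show "eventually (\<lambda>n. y > ereal c - enn2ereal (I n)) sequentially"
  proof (cases "y > ereal c")
    case True
    have "ereal c - enn2ereal (I n) \<le> ereal c" for n
      using enn2ereal_nonneg[of "I n"] by (cases "enn2ereal (I n)") auto
    then show ?thesis using True by (intro always_eventually allI) (meson le_less_trans)
  next
    case False
    then have "y \<le> ereal c" by simp
    moreover have "y \<noteq> -\<infinity>" using y by auto
    ultimately obtain w where w: "y = ereal w" "w \<le> c" by (cases y) auto
    have lt: "ennreal (c - w) < J"
    proof (cases J rule: ennreal_cases)
      case (real j)
      then have "ereal (c - j) < ereal w" using y w by simp
      then have "c - w < j" by simp
      moreover have "0 < j" using \<open>c - w < j\<close> w by linarith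
      ultimately show ?thesis using real by (simp add: ennreal_lessI)
    next
      case top then show ?thesis by simp
    qed
    have "\<forall>z<liminf I. eventually (\<lambda>n. z < I n) sequentially"
      using le_Liminf_iff[of "liminf I" sequentially I] by simp
    then have "eventually (\<lambda>n. ennreal (c - w) < I n) sequentially"
      using lt J by (meson less_le_trans)
    then show ?thesis
    proof eventually_elim
      case (elim n)
      show ?case
      proof (cases "I n" rule: ennreal_cases)
        case (real v)
        then have "c - w < v" using elim w by (simp add: ennreal_less_iff)
        then show ?thesis using real w by simp
      next
        case top then show ?thesis using w by simp
      qed
    qed
  qed
qed

lemma emp_le:
  fixes r :: "nat \<Rightarrow> real" and f :: "real \<Rightarrow> ereal"
  assumes fc: "\<And>x. f x \<le> ereal c" and n: "n \<ge> 1"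
  shows "ereal (1 / real n) * (\<Sum>k = 1..n. f (r k))
     \<le> ereal c - enn2ereal ((\<Sum>k = 1..n. e2ennreal (ereal c - f (r k))) / of_nat n)"
proof (cases "\<exists>k\<in>{1..n}. f (r k) = -\<infinity>")
  case True
  then obtain k0 where k0: "k0 \<in> {1..n}" "f (r k0) = -\<infinity>" by blast
  have "(\<Sum>k = 1..n. f (r k)) = f (r k0) + (\<Sum>k\<in>{1..n} - {k0}. f (r k))"
    using k0 by (subst sum.remove[of _ k0]) auto
  moreover have "(\<Sum>k\<in>{1..n} - {k0}. f (r k)) \<le> (\<Sum>k\<in>{1..n} - {k0}. ereal c)"
    by (intro sum_mono fc)
  then have "(\<Sum>k\<in>{1..n} - {k0}. f (r k)) \<noteq> \<infinity>" by auto
  ultimately have "(\<Sum>k = 1..n. f (r k)) = -\<infinity>" using k0 by simp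
  then show ?thesis using n by simp
next
  case False
  define v where "v k = real_of_ereal (f (r k))" for k
  have fv: "f (r k) = ereal (v k)" if "k \<in> {1..n}" for k
  proof -
    have "f (r k) \<noteq> -\<infinity>" using False that by auto
    moreover have "f (r k) \<noteq> \<infinity>" using fc[of "r k"] by auto
    ultimately show ?thesis unfolding v_def by (cases "f (r k)") auto
  qed
  have vc: "v k \<le> c" if "k \<in> {1..n}" for k using fc[of "r k"] fv[OF that] by simp
  have s1: "(\<Sum>k = 1..n. f (r k)) = ereal (\<Sum>k = 1..n. v k)"
  proof -
    have "(\<Sum>k = 1..n. f (r k)) = (\<Sum>k = 1..n. ereal (v k))"
      by (rule sum.cong) (auto simp: fv)
    then show ?thesis by simp
  qed
  have s2: "(\<Sum>k = 1..n. e2ennreal (ereal c - f (r k))) = ennreal (\<Sum>k = 1..n. c - v k)"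
  proof -
    have "(\<Sum>k = 1..n. e2ennreal (ereal c - f (r k))) = (\<Sum>k = 1..n. ennreal (c - v k))"
      by (intro sum.cong refl) (simp add: fv e2ennreal_ereal)
    also have "\<dots> = ennreal (\<Sum>k = 1..n. c - v k)"
      using vc by (intro sum_ennreal) auto
    finally show ?thesis .
  qed
  have nn: "0 \<le> (\<Sum>k = 1..n. c - v k)" using vc by (intro sum_nonneg) auto
  have "ennreal (\<Sum>k = 1..n. c - v k) / of_nat n = ennreal ((\<Sum>k = 1..n. c - v k) / n)"
    using n nn by (simp add: ennreal_of_nat_eq_real_of_nat divide_ennreal)
  moreover have "(\<Sum>k = 1..n. c - v k) = n * c - (\<Sum>k = 1..n. v k)"
    by (simp add: sum_subtractf)
  moreover have "c - (n * c - (\<Sum>k = 1..n. v k)) / n = (\<Sum>k = 1..n. v k) / n"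
    using n by (simp add: field_simps)
  ultimately show ?thesis using s1 s2 nn n by simp
qed




lemma ext_integral_ge:
  fixes G :: "real measure" and f :: "real \<Rightarrow> ereal"
  assumes G: "prob_space G" and fm[measurable]: "f \<in> borel_measurable G"
    and fc: "\<And>x. f x \<le> ereal c" and c: "c \<ge> 0"
  shows "ereal c - enn2ereal (\<integral>\<^sup>+x. e2ennreal (ereal c - f x) \<partial>G) \<le> ext_integral G f"
proof -
  interpret prob_space G by (rule G)
  define P where "P = (\<integral>\<^sup>+ x. e2ennreal (max 0 (f x)) \<partial>G)"
  define N where "N = (\<integral>\<^sup>+ x. e2ennreal (max 0 (- f x)) \<partial>G)"
  define H where "H = (\<integral>\<^sup>+x. e2ennreal (ereal c - f x) \<partial>G)"
  have pw: "e2ennreal (max 0 (f x)) + e2ennreal (ereal c - f x) = ennreal c + e2ennreal (max 0 (- f x))" for x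
  proof (cases "f x")
    case (real r)
    then have rc: "r \<le> c" using fc[of x] by simp
    have "e2ennreal (max 0 (f x)) + e2ennreal (ereal c - f x) = ennreal (max 0 r) + ennreal (c - r)"
      using real by (simp add: e2ennreal_ereal max_def)
    also have "\<dots> = ennreal (max 0 r + (c - r))" using rc by (simp add: ennreal_plus)
    also have "max 0 r + (c - r) = c + max 0 (- r)" by (simp add: max_def)
    also have "ennreal (c + max 0 (- r)) = ennreal c + ennreal (max 0 (- r))" using c by (simp add: ennreal_plus)
    also have "ennreal (max 0 (- r)) = e2ennreal (max 0 (- f x))"
      using real by (simp add: e2ennreal_ereal max_def)
    finally show ?thesis .
  next
    case PInf then show ?thesis using fc[of x] by simp
  next
    case MInf then show ?thesis by (simp add: e2ennreal_ereal)
  qed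
  have "P + H = (\<integral>\<^sup>+ x. e2ennreal (max 0 (f x)) + e2ennreal (ereal c - f x) \<partial>G)"
    unfolding P_def H_def by (rule nn_integral_add[symmetric]) measurable
  also have "\<dots> = (\<integral>\<^sup>+ x. ennreal c + e2ennreal (max 0 (- f x)) \<partial>G)" by (simp only: pw)
  also have "\<dots> = (\<integral>\<^sup>+ x. ennreal c \<partial>G) + N"
    unfolding N_def by (rule nn_integral_add) measurable
  also have "(\<integral>\<^sup>+ x. ennreal c \<partial>G) = ennreal c" by (simp add: emeasure_space_1)
  finally have PHN: "P + H = ennreal c + N" .
  have "P \<le> (\<integral>\<^sup>+ x. ennreal c \<partial>G)" unfolding P_def
  proof (rule nn_integral_mono)
    fix x
    show "e2ennreal (max 0 (f x)) \<le> ennreal c"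
      using fc[of x] c by (cases "f x") (auto simp: e2ennreal_ereal max_def intro: ennreal_leI)
  qed
  then have Pc: "P \<le> ennreal c" by (simp add: emeasure_space_1)
  show ?thesis
  proof (cases H rule: ennreal_cases)
    case top
    then show ?thesis unfolding H_def[symmetric] by simp
  next
    case (real h)
    obtain p where p: "P = ennreal p" "p \<ge> 0" using Pc by (cases P rule: ennreal_cases) (auto simp: top_unique)
    have "N \<le> P + H" using PHN by (metis add.commute add_increasing2 le_iff_add zero_le)
    also have "P + H = ennreal (p + h)" using p real by (simp add: ennreal_plus)
    finally have Ntop: "N < top" by (simp add: top.not_eq_extremum le_less_trans)
    obtain q where q: "N = ennreal q" "q \<ge> 0" using Ntop by (cases N rule: ennreal_cases) auto
    have "ennreal (p + h) = ennreal (c + q)"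
    proof -
      have "ennreal (p + h) = P + H" using p real by (simp add: ennreal_plus)
      also have "\<dots> = ennreal c + N" by (rule PHN)
      also have "\<dots> = ennreal (c + q)" using q c by (simp add: ennreal_plus)
      finally show ?thesis .
    qed
    then have "p + h = c + q" using p q real c by (subst (asm) ennreal_inj) auto
    then show ?thesis unfolding H_def[symmetric] ext_integral_def P_def[symmetric] N_def[symmetric]
      using p q real by simp
  qed
qed




lemma rat_to_cont:
  fixes Fn :: "nat \<Rightarrow> real \<Rightarrow> real" and Gc :: "real \<Rightarrow> real"
  assumes mono: "\<And>n s t. s \<le> t \<Longrightarrow> Fn n s \<le> Fn n t"
    and conv: "\<And>q. q \<in> \<rat> \<Longrightarrow> (\<lambda>n. Fn n q) \<longlonglongrightarrow> Gc q"
    and cont: "isCont Gc t"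
  shows "(\<lambda>n. Fn n t) \<longlonglongrightarrow> Gc t"
proof (rule order_tendstoI)
  have lim: "(Gc \<longlongrightarrow> Gc t) (at t)" using cont by (simp add: isCont_def)
  fix a assume a: "a < Gc t"
  have "eventually (\<lambda>s. a < Gc s) (at t)" using order_tendstoD(1)[OF lim a] .
  then obtain d where d: "d > 0" "\<And>s. s \<noteq> t \<Longrightarrow> dist s t < d \<Longrightarrow> a < Gc s"
    unfolding eventually_at by auto
  have "t - d < t" using d by simp
  from Rats_dense_in_real[OF this] obtain q where q: "q \<in> \<rat>" "t - d < q" "q < t" by blast
  have "a < Gc q" using d(2)[of q] q by (simp add: dist_real_def)
  from order_tendstoD(1)[OF conv[OF q(1)] this]
  show "eventually (\<lambda>n. a < Fn n t) sequentially"
    by eventually_elim (use mono[of q t] q in \<open>auto intro: less_le_trans\<close>)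
next
  have lim: "(Gc \<longlongrightarrow> Gc t) (at t)" using cont by (simp add: isCont_def)
  fix a assume a: "a > Gc t"
  have "eventually (\<lambda>s. a > Gc s) (at t)" using order_tendstoD(2)[OF lim a] .
  then obtain d where d: "d > 0" "\<And>s. s \<noteq> t \<Longrightarrow> dist s t < d \<Longrightarrow> a > Gc s"
    unfolding eventually_at by auto
  have "t < t + d" using d by simp
  from Rats_dense_in_real[OF this] obtain q where q: "q \<in> \<rat>" "t < q" "q < t + d" by blast
  have "a > Gc q" using d(2)[of q] q by (simp add: dist_real_def)
  from order_tendstoD(2)[OF conv[OF q(1)] this]
  show "eventually (\<lambda>n. a > Fn n t) sequentially"
    by eventually_elim (use mono[of t q] q in \<open>auto intro: le_less_trans\<close>)
qed

lemma h_less: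
  assumes "f y \<le> ereal c" "zz \<ge> 0"
  shows "ennreal zz < e2ennreal (ereal c - f y) \<longleftrightarrow> f y < ereal (c - zz)"
proof (cases "f y")
  case (real r)
  then have "r \<le> c" using assms by simp
  have "ennreal zz < ennreal (c - r) \<longleftrightarrow> zz < c - r"
    using assms(2) by (auto simp: ennreal_less_iff intro: ennreal_lessI)
  then show ?thesis using real by auto
next
  case PInf then show ?thesis using assms by simp
next
  case MInf then show ?thesis by simp
qed

lemma det_main:
  fixes x :: "nat \<Rightarrow> nat \<Rightarrow> real" and G :: "real measure" and f :: "real \<Rightarrow> ereal"
  assumes G: "real_distribution G"
    and conv: "\<And>t. isCont (cdf G) t \<Longrightarrow> (\<lambda>n. (\<Sum>k\<in>{1..n}. of_bool (x n k \<le> t)) / real n) \<longlonglongrightarrow> cdf G t"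
    and usc: "usc f" and fc: "\<And>y. f y \<le> ereal c" and c: "c \<ge> 0"
  shows "limsup (\<lambda>n. ereal (1 / real n) * (\<Sum>k = 1..n. f (x n k))) \<le> ext_integral G f"
proof -
  define S where "S n = {1..max 1 n}" for n :: nat
  have Sfin: "finite (S n)" and Sne: "S n \<noteq> {}" for n unfolding S_def by auto
  have S1: "n \<ge> 1 \<Longrightarrow> S n = {1..n}" for n unfolding S_def by (simp add: max_def)
  define \<mu> where "\<mu> n = distr (measure_pmf (pmf_of_set (S n))) borel (x n)" for n
  have \<mu>real: "real_distribution (\<mu> n)" for n
    unfolding \<mu>_def by (rule prob_space.real_distribution_distr) (auto simp: prob_space_measure_pmf)
  have cdf\<mu>: "cdf (\<mu> n) t = (\<Sum>k\<in>{1..n}. of_bool (x n k \<le> t)) / real n" if n: "n \<ge> 1" for n t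
  proof -
    have "cdf (\<mu> n) t = measure (measure_pmf (pmf_of_set (S n))) (x n -` {..t})"
      unfolding cdf_def \<mu>_def by (subst measure_distr) auto
    also have "\<dots> = card (S n \<inter> x n -` {..t}) / card (S n)"
      by (rule measure_pmf_of_set[OF Sne Sfin])
    also have "\<dots> = (\<Sum>k\<in>{1..n}. of_bool (x n k \<le> t)) / real n"
      using S1[OF n] by (simp add: vimage_def Int_def)
    finally show ?thesis .
  qed
  have weak: "weak_conv_m \<mu> G"
    unfolding weak_conv_m_def weak_conv_def
  proof (intro allI impI)
    fix t assume "isCont (cdf G) t"
    from conv[OF this] show "(\<lambda>n. cdf (\<mu> n) t) \<longlonglongrightarrow> cdf G t"
    proof (rule Lim_transform_eventually)
      show "eventually (\<lambda>n. (\<Sum>k\<in>{1..n}. of_bool (x n k \<le> t)) / real n = cdf (\<mu> n) t) sequentially"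
        using eventually_ge_at_top[of 1] by eventually_elim (simp add: cdf\<mu>)
    qed
  qed
  from Skorohod[OF \<mu>real G weak] obtain \<Omega> :: "real measure" and Ys :: "nat \<Rightarrow> real \<Rightarrow> real" and Y
    where \<Omega>: "prob_space \<Omega>" and Ysm: "\<And>n. Ys n \<in> measurable \<Omega> borel"
      and Ysd: "\<And>n. distr \<Omega> borel (Ys n) = \<mu> n" and Ym: "Y \<in> measurable \<Omega> lborel"
      and Yd: "distr \<Omega> borel Y = G" and Ylim: "\<And>\<omega>. \<omega> \<in> space \<Omega> \<Longrightarrow> (\<lambda>n. Ys n \<omega>) \<longlonglongrightarrow> Y \<omega>"
    by blast
  define h where "h y = e2ennreal (ereal c - f y)" for y
  have fm: "f \<in> borel_measurable borel" by (rule usc_measurable[OF usc])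
  have hm: "h \<in> borel_measurable borel" unfolding h_def using fm by measurable
  have Ym': "Y \<in> measurable \<Omega> borel" using Ym by simp
  have lsc: "h (Y \<omega>) \<le> liminf (\<lambda>n. h (Ys n \<omega>))" if \<omega>: "\<omega> \<in> space \<Omega>" for \<omega>
    unfolding le_Liminf_iff
  proof (intro allI impI)
    fix z assume z: "z < h (Y \<omega>)"
    then obtain zz where zz: "z = ennreal zz" "zz \<ge> 0" by (cases z rule: ennreal_cases) auto
    have "f (Y \<omega>) < ereal (c - zz)" using z zz h_less[of f "Y \<omega>" c zz] fc unfolding h_def by simp
    from usc_seq[OF usc Ylim[OF \<omega>] this]
    show "eventually (\<lambda>n. z < h (Ys n \<omega>)) sequentially"
      by eventually_elim (use zz h_less[of f _ c zz] fc in \<open>auto simp: h_def\<close>)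
  qed
  define I where "I n = (\<Sum>k\<in>S n. h (x n k)) / of_nat (card (S n))" for n
  have In: "(\<integral>\<^sup>+ \<omega>. h (Ys n \<omega>) \<partial>\<Omega>) = I n" for n
  proof -
    have "(\<integral>\<^sup>+ \<omega>. h (Ys n \<omega>) \<partial>\<Omega>) = integral\<^sup>N (\<mu> n) h"
      unfolding Ysd[symmetric] by (rule nn_integral_distr[symmetric]) (use Ysm hm in auto)
    also have "\<dots> = (\<integral>\<^sup>+ k. h (x n k) \<partial>measure_pmf (pmf_of_set (S n)))"
      unfolding \<mu>_def by (rule nn_integral_distr) (use hm in auto)
    also have "\<dots> = I n" unfolding I_def by (rule nn_integral_pmf_of_set[OF Sne Sfin])
    finally show ?thesis .
  qed
  have "integral\<^sup>N G h = (\<integral>\<^sup>+ \<omega>. h (Y \<omega>) \<partial>\<Omega>)"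
    unfolding Yd[symmetric] by (rule nn_integral_distr) (use Ym' hm in auto)
  also have "\<dots> \<le> (\<integral>\<^sup>+ \<omega>. liminf (\<lambda>n. h (Ys n \<omega>)) \<partial>\<Omega>)"
    by (rule nn_integral_mono) (rule lsc)
  also have "\<dots> \<le> liminf (\<lambda>n. \<integral>\<^sup>+ \<omega>. h (Ys n \<omega>) \<partial>\<Omega>)"
    by (rule nn_integral_liminf) (use Ysm hm in auto)
  also have "\<dots> = liminf I" by (simp add: In)
  finally have HI: "integral\<^sup>N G h \<le> liminf I" .
  have "limsup (\<lambda>n. ereal (1 / real n) * (\<Sum>k = 1..n. f (x n k))) \<le> limsup (\<lambda>n. ereal c - enn2ereal (I n))"
  proof (rule Limsup_mono)
    show "eventually (\<lambda>n. ereal (1 / real n) * (\<Sum>k = 1..n. f (x n k)) \<le> ereal c - enn2ereal (I n)) sequentially"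
      using eventually_ge_at_top[of 1]
    proof eventually_elim
      case (elim n)
      show ?case using emp_le[of f c n "x n", OF fc elim] S1[OF elim] by (simp add: I_def h_def)
    qed
  qed
  also have "\<dots> \<le> ereal c - enn2ereal (integral\<^sup>N G h)" by (rule limsup_cminus_bound[OF HI])
  also have "\<dots> \<le> ext_integral G f" unfolding h_def
  proof (rule ext_integral_ge)
    show "f \<in> borel_measurable G"
      using fm by (subst measurable_cong_sets[OF real_distribution.events_eq_borel[OF G] refl])
  qed (use G fc c in \<open>auto simp: real_distribution_def\<close>)
  finally show ?thesis .
qed




lemma block_le_iff:
  fixes X :: "nat \<Rightarrow> 'a \<Rightarrow> real"
  assumes k: "k \<ge> 1" and mm: "mm > 0" and a: "a mm > 0"
  shows "block_max_norm X a b mm k \<omega> \<le> t \<longleftrightarrow> (\<forall>i\<in>{(k - 1) * mm + 1 .. k * mm}. X i \<omega> \<le> a mm * t + b mm)"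
proof -
  let ?K = "{(k - 1) * mm + 1 .. k * mm}"
  have ne: "?K \<noteq> {}"
  proof -
    have "k * mm = (k - 1) * mm + mm" using k by (cases k) auto
    then have "(k - 1) * mm + 1 \<le> k * mm" using mm by linarith
    then show "?K \<noteq> {}" by (simp del: One_nat_def)
  qed
  have "block_max_norm X a b mm k \<omega> \<le> t \<longleftrightarrow> Max ((\<lambda>i. X i \<omega>) ` ?K) - b mm \<le> t * a mm"
    unfolding block_max_norm_def using a by (simp add: pos_divide_le_eq)
  also have "\<dots> \<longleftrightarrow> Max ((\<lambda>i. X i \<omega>) ` ?K) \<le> a mm * t + b mm" by (simp add: algebra_simps)
  also have "\<dots> \<longleftrightarrow> (\<forall>i\<in>?K. X i \<omega> \<le> a mm * t + b mm)"
    using ne by (subst Max_le_iff) auto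
  finally show ?thesis .
qed

lemma gev_mono_from_lim:
  fixes F :: "real \<Rightarrow> real"
  assumes Fm: "\<And>x y. x \<le> y \<Longrightarrow> F x \<le> F y" and F0: "\<And>x. F x \<ge> 0"
    and N: "gev_normalizes F \<gamma> a b" and xy: "x \<le> y"
  shows "gev_cdf \<gamma> x \<le> gev_cdf \<gamma> y"
proof (rule LIMSEQ_le)
  show "(\<lambda>m. F (a m * x + b m) ^ m) \<longlonglongrightarrow> gev_cdf \<gamma> x" "(\<lambda>m. F (a m * y + b m) ^ m) \<longlonglongrightarrow> gev_cdf \<gamma> y"
    using N unfolding gev_normalizes_def by auto
  show "\<exists>N. \<forall>m\<ge>N. F (a m * x + b m) ^ m \<le> F (a m * y + b m) ^ m"
  proof (intro exI[of _ 1] allI impI)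
    fix m :: nat assume "m \<ge> 1"
    then have "a m > 0" using N unfolding gev_normalizes_def by auto
    then have "a m * x + b m \<le> a m * y + b m" using xy by simp
    then show "F (a m * x + b m) ^ m \<le> F (a m * y + b m) ^ m"
      by (intro power_mono Fm F0)
  qed
qed

theorem lemma2p3:
  fixes M :: "'a measure" and X :: "nat \<Rightarrow> 'a \<Rightarrow> real" and F :: "real \<Rightarrow> real"
    and \<gamma>0 :: real and a b :: "nat \<Rightarrow> real" and m :: "nat \<Rightarrow> nat" and f :: "real \<Rightarrow> ereal"
  assumes "prob_space M"
    and "\<And>i. i \<ge> 1 \<Longrightarrow> X i \<in> borel_measurable M"
    and "prob_space.indep_vars M (\<lambda>_. borel) X {1..}"
    and "\<And>i x. i \<ge> 1 \<Longrightarrow> measure M {\<omega> \<in> space M. X i \<omega> \<le> x} = F x"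
    and "in_DoA F \<gamma>0"
    and "gev_normalizes F \<gamma>0 a b"
    and "\<And>n. m n > 0"
    and "filterlim m at_top sequentially"
    and "usc f"
    and "\<exists>c::real. \<forall>x. f x \<le> ereal c"
  shows "AE \<omega> in M. limsup (\<lambda>n. emp_block X a b m f n \<omega>) \<le> ext_integral (gev_measure \<gamma>0) f"
proof -
  note PS = assms(1) and Xm = assms(2) and indep = assms(3) and Fd = assms(4)
    and N = assms(6) and mpos = assms(7) and mlim = assms(8) and usc = assms(9)
  interpret prob_space M by (rule PS)
  obtain c0 :: real where fc0: "\<forall>x. f x \<le> ereal c0" using assms(10) by blast
  define c where "c = max c0 0"
  have fc: "f x \<le> ereal c" for x using fc0 unfolding c_def by (meson order_trans ereal_less_eq(3) max.cobounded1)
  have c: "c \<ge> 0" unfolding c_def by simp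
  have apos: "a mm > 0" if "mm \<ge> 1" for mm using N that unfolding gev_normalizes_def by auto
  have F0: "F x \<ge> 0" for x using Fd[of 1 x] by (metis measure_nonneg order_refl)
  have Fm: "F x \<le> F y" if "x \<le> y" for x y
  proof -
    have "measure M {\<omega> \<in> space M. X 1 \<omega> \<le> x} \<le> measure M {\<omega> \<in> space M. X 1 \<omega> \<le> y}"
      by (rule finite_measure_mono) (use that Xm[of 1] in \<open>auto intro: borel_measurable_le\<close>)
    then show ?thesis using Fd[of 1] by simp
  qed
  have Gmono: "gev_cdf \<gamma>0 x \<le> gev_cdf \<gamma>0 y" if "x \<le> y" for x y
    by (rule gev_mono_from_lim[OF Fm F0 N that])
  have Greal: "real_distribution (gev_measure \<gamma>0)"
    unfolding gev_measure_def
    by (rule real_distribution_interval_measure) (auto intro: Gmono gev_cdf_right_cont gev_cdf_at_top gev_cdf_at_bot)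
  have Gcdf: "cdf (gev_measure \<gamma>0) = gev_cdf \<gamma>0"
    unfolding gev_measure_def cdf_def fun_eq_iff
    by (intro allI measure_interval_measure_Iic) (auto intro: Gmono gev_cdf_right_cont gev_cdf_at_bot)
  define bm where "bm n k \<omega> = block_max_norm X a b (m n) k \<omega>" for n k \<omega>
  have pointwise: "AE \<omega> in M. (\<lambda>n. (\<Sum>k\<in>{1..n}. of_bool (bm n k \<omega> \<le> t)) / real n) \<longlonglongrightarrow> gev_cdf \<gamma>0 t" for t
  proof -
    define cc where "cc n = a (m n) * t + b (m n)" for n
    define K where "K n k = {(k - 1) * m n + 1 .. k * m n}" for n k
    define Z where "Z n k \<omega> = (of_bool (\<forall>i\<in>K n k. X i \<omega> \<le> cc n) :: real)" for n k \<omega>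
    have ind: "indep_vars (\<lambda>_. borel) (Z n) {1..n}" for n
      unfolding Z_def K_def using block_indep[OF indep mpos[of n], of "cc n" n] by simp
    have bnd: "Z n k \<omega> \<in> {0..1}" for n k \<omega> unfolding Z_def by simp
    have E: "expectation (Z n k) = F (cc n) ^ m n" if k: "k \<in> {1..n}" for n k
    proof -
      have K1: "K n k \<subseteq> {1..}" unfolding K_def by auto
      have "expectation (Z n k) = expectation (indicator {\<omega>\<in>space M. \<forall>i\<in>K n k. X i \<omega> \<le> cc n})"
        by (rule Bochner_Integration.integral_cong) (auto simp: Z_def indicator_def)
      also have "\<dots> = prob {\<omega>\<in>space M. \<forall>i\<in>K n k. X i \<omega> \<le> cc n}"
        by (simp add: Int_absorb2 subset_iff)
      also have "\<dots> = F (cc n) ^ m n" unfolding K_def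
        by (rule block_prob[OF indep _ mpos Fd]) (use k in auto)
      finally show ?thesis .
    qed
    have p: "(\<lambda>n. F (cc n) ^ m n) \<longlonglongrightarrow> gev_cdf \<gamma>0 t"
    proof -
      have "(\<lambda>mm. F (a mm * t + b mm) ^ mm) \<longlonglongrightarrow> gev_cdf \<gamma>0 t" using N unfolding gev_normalizes_def by auto
      from filterlim_compose[OF this mlim] show ?thesis unfolding cc_def by (simp add: o_def)
    qed
    have "AE \<omega> in M. (\<lambda>n. (\<Sum>k\<in>{1..n}. Z n k \<omega>) / real n) \<longlonglongrightarrow> gev_cdf \<gamma>0 t"
      by (rule triangular_lln[OF ind bnd E p])
    moreover have "Z n k \<omega> = of_bool (bm n k \<omega> \<le> t)" if "k \<in> {1..n}" for n k \<omega>
      unfolding Z_def bm_def K_def cc_def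
      using block_le_iff[of k "m n" a X b \<omega> t] that mpos[of n] apos[of "m n"] by simp
    ultimately show ?thesis
      by (elim AE_mp) (intro AE_I2 impI, simp)
  qed
  have "AE \<omega> in M. \<forall>q\<in>\<rat>. (\<lambda>n. (\<Sum>k\<in>{1..n}. of_bool (bm n k \<omega> \<le> q)) / real n) \<longlonglongrightarrow> gev_cdf \<gamma>0 q"
    using pointwise by (subst AE_ball_countable[OF countable_rat]) auto
  then show ?thesis
  proof (rule AE_mp, intro AE_I2 impI)
    fix \<omega> assume conv: "\<forall>q\<in>\<rat>. (\<lambda>n. (\<Sum>k\<in>{1..n}. of_bool (bm n k \<omega> \<le> q)) / real n) \<longlonglongrightarrow> gev_cdf \<gamma>0 q"
    have lim: "(\<lambda>n. (\<Sum>k\<in>{1..n}. of_bool (bm n k \<omega> \<le> t)) / real n) \<longlonglongrightarrow> cdf (gev_measure \<gamma>0) t"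
      if "isCont (cdf (gev_measure \<gamma>0)) t" for t
      unfolding Gcdf
    proof (rule rat_to_cont[where Fn="\<lambda>n t. (\<Sum>k\<in>{1..n}. of_bool (bm n k \<omega> \<le> t)) / real n"])
      fix n :: nat and s t :: real assume "s \<le> t"
      then show "(\<Sum>k\<in>{1..n}. of_bool (bm n k \<omega> \<le> s)) / real n \<le> (\<Sum>k\<in>{1..n}. of_bool (bm n k \<omega> \<le> t)) / real n"
        by (intro divide_right_mono sum_mono) auto
    qed (use conv that Gcdf in auto)
    have "limsup (\<lambda>n. ereal (1 / real n) * (\<Sum>k = 1..n. f (bm n k \<omega>))) \<le> ext_integral (gev_measure \<gamma>0) f"
      by (rule det_main[OF Greal lim usc fc c])
    then show "limsup (\<lambda>n. emp_block X a b m f n \<omega>) \<le> ext_integral (gev_measure \<gamma>0) f"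
      unfolding emp_block_def bm_def .
  qed
qed


end
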